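(* Fix $n\ge1$. There exist $c_n>0$ and $\kappa_0>0$ such that for all $0<\kappa<\kappa_0$: for every $j$ with $|j|\le k-1$ and $I_j\neq\emptyset$, $$\min_{x\in I_j}\psi_{n,j}(x)\ge c_n\kappa,$$ and moreover $\psi_{n,k}(a_k)\ge c_n\kappa$ and $\psi_{n,-k}(-a_k)\ge c_n\kappa$.
   Context: Fix $n\ge1$. Let $h_n$ be the physicists' Hermite polynomial $h_n(y)=(-1)^ne^{y^2}\frac{d^n}{dy^n}e^{-y^2}$, $\varphi(y)=e^{-y^2/2}$, $\Psi_n=h_n\varphi$. Let $0\le z_1<z_2<\dots<z_k$ be the nonnegative zeros of $h_n$, where $k=n/2$ if $n$ is even (then $z_1>0$) and $k=(n+1)/2$ if $n$ is odd (then $z_1=0$). For $\kappa>0$ define: $a_1=\lfloor z_1/\kappa\rfloor+1$; $\beta_1=1$ if $z_1=0$ and $\beta_1=z_1/(\kappa(a_1-1))$ otherwise; for $2\le j\le k$, $a_j=\lfloor z_j/(\beta_{j-1}\kappa)\rfloor+1$ and $\beta_j=z_j/(\kappa(a_j-1))$; for $1\le j\le k-1$, $b_j=\lfloor z_{j+1}/(\beta_j\kappa)\rfloor-1$, and $b_k=\infty$. Set $I_j=[a_j,b_j]\cap\mathbb{Z}$ for $1\le j\le k$ (so $I_k=[a_k,\infty)\cap\mathbb{Z}$), $I_{-j}=[-b_j,-a_j]\cap\mathbb{Z}$ and $\beta_{-j}=\beta_j$. If $n$ is even, put $b_0=a_1-2$, $I_0=[-b_0,b_0]\cap\mathbb{Z}$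 and $\beta_0=1$; if $n$ is odd, $I_0=\emptyset$. For $x\in I_j$ set $\psi_{n,j}(x)=|h_n(\beta_j\kappa x)|\,\varphi(\beta_j\kappa x)$. *)

theory Defs
  imports "HOL-Analysis.Analysis"
begin

definition hermite :: "nat \<Rightarrow> real \<Rightarrow> real" where
  "hermite n y = (-1) ^ n * exp (y^2) * (deriv ^^ n) (\<lambda>t. exp (- (t^2))) y"

definition gauss :: "real \<Rightarrow> real" where
  "gauss y = exp (- (y^2) / 2)"

definition hzeros :: "nat \<Rightarrow> real list" where
  "hzeros n = sorted_list_of_set {y::real. 0 \<le> y \<and> hermite n y = 0}"

definition hz :: "nat \<Rightarrow> nat \<Rightarrow> real" where
  "hz n j = hzeros n ! (j - 1)"

definition hk :: "nat \<Rightarrow> nat" where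
  "hk n = (if even n then n div 2 else (n + 1) div 2)"

text \<open>The pair (a_j, beta_j) for j \<ge> 1 (value at 0 is a dummy).\<close>
fun hab :: "nat \<Rightarrow> real \<Rightarrow> nat \<Rightarrow> int \<times> real" where
  "hab n \<kappa> 0 = (0, 1)"
| "hab n \<kappa> (Suc 0) =
     (let a = \<lfloor>hz n 1 / \<kappa>\<rfloor> + 1
      in (a, if hz n 1 = 0 then 1 else hz n 1 / (\<kappa> * real_of_int (a - 1))))"
| "hab n \<kappa> (Suc (Suc j)) =
     (let \<beta> = snd (hab n \<kappa> (Suc j));
          a = \<lfloor>hz n (j + 2) / (\<beta> * \<kappa>)\<rfloor> + 1
      in (a, hz n (j + 2) / (\<kappa> * real_of_int (a - 1))))"

definition ha :: "nat \<Rightarrow> real \<Rightarrow> nat \<Rightarrow> int" where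
  "ha n \<kappa> j = fst (hab n \<kappa> j)"

definition hbeta :: "nat \<Rightarrow> real \<Rightarrow> int \<Rightarrow> real" where
  "hbeta n \<kappa> j = (if j = 0 then 1 else snd (hab n \<kappa> (nat \<bar>j\<bar>)))"

text \<open>b_j for 1 \<le> j \<le> k-1 (b_k = infinity is handled in hI).\<close>
definition hb :: "nat \<Rightarrow> real \<Rightarrow> nat \<Rightarrow> int" where
  "hb n \<kappa> j = \<lfloor>hz n (j + 1) / (snd (hab n \<kappa> j) * \<kappa>)\<rfloor> - 1"

definition hI :: "nat \<Rightarrow> real \<Rightarrow> int \<Rightarrow> int set" where
  "hI n \<kappa> j =
    (if j = 0 then
       (if even n then {x. - (ha n \<kappa> 1 - 2) \<le> x \<and> x \<le> ha n \<kappa> 1 - 2} else {})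
     else if j > 0 then
       (if nat j = hk n then {x. ha n \<kappa> (nat j) \<le> x}
        else {x. ha n \<kappa> (nat j) \<le> x \<and> x \<le> hb n \<kappa> (nat j)})
     else
       (if nat (- j) = hk n then {x. x \<le> - ha n \<kappa> (nat (- j))}
        else {x. - hb n \<kappa> (nat (- j)) \<le> x \<and> x \<le> - ha n \<kappa> (nat (- j))}))"

definition hpsi :: "nat \<Rightarrow> real \<Rightarrow> int \<Rightarrow> int \<Rightarrow> real" where
  "hpsi n \<kappa> j x = \<bar>hermite n (hbeta n \<kappa> j * \<kappa> * real_of_int x)\<bar>
                    * gauss (hbeta n \<kappa> j * \<kappa> * real_of_int x)"

end

theory Submission
  imports Defs "HOL-Real_Asymp.Real_Asymp"
begin

fun Hp :: "nat \<Rightarrow> real poly" where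
  "Hp 0 = 1"
| "Hp (Suc n) = [:0,2:] * Hp n - pderiv (Hp n)"

lemma deriv_iter_gauss:
  "(deriv ^^ n) (\<lambda>t. exp (- (t^2))) = (\<lambda>t. (-1)^n * poly (Hp n) t * exp (- (t^2)))"
proof (induction n)
  case 0
  then show ?case by simp
next
  case (Suc n)
  have "deriv (\<lambda>t. (-1)^n * poly (Hp n) t * exp (- (t^2))) t =
        (-1)^Suc n * poly (Hp (Suc n)) t * exp (- (t^2))" for t
  proof (rule DERIV_imp_deriv)
    have e: "((\<lambda>t. exp (- (t^2))) has_real_derivative exp (- (t^2)) * (- (2 * t))) (at t)"
      by (rule derivative_eq_intros refl)+ simp
    have d: "((\<lambda>t. (-1)^n * poly (Hp n) t * exp (- (t^2))) has_real_derivative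
       ((-1)^n * poly (pderiv (Hp n)) t) * exp (- (t^2)) + (exp (- (t^2)) * (- (2 * t))) * ((-1)^n * poly (Hp n) t)) (at t)"
      by (rule DERIV_mult[OF DERIV_cmult[OF poly_DERIV] e])
    have eq: "((-1)^n * poly (pderiv (Hp n)) t) * exp (- (t^2)) + (exp (- (t^2)) * (- (2 * t))) * ((-1)^n * poly (Hp n) t)
       = (-1)^Suc n * poly (Hp (Suc n)) t * exp (- (t^2))"
      by (simp add: algebra_simps)
    show "((\<lambda>t. (-1)^n * poly (Hp n) t * exp (- (t^2))) has_real_derivative
        (-1)^Suc n * poly (Hp (Suc n)) t * exp (- (t^2))) (at t)"
      using d eq by simp
  qed
  note H = this
  have "(deriv ^^ Suc n) (\<lambda>t. exp (- (t^2))) = deriv (\<lambda>t. (-1)^n * poly (Hp n) t * exp (- (t^2)))"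
    using Suc.IH by simp
  also have "\<dots> = (\<lambda>t. (-1)^Suc n * poly (Hp (Suc n)) t * exp (- (t^2)))"
    by (rule ext) (rule H)
  finally show ?case .
qed

lemma hermite_Hp: "hermite n y = poly (Hp n) y"
  unfolding hermite_def deriv_iter_gauss
  by (simp add: exp_minus field_simps)

lemma Hp_deg: "degree (Hp n) = n \<and> coeff (Hp n) n = 2^n"
proof (induction n)
  case 0 then show ?case by simp
next
  case (Suc n)
  have c1: "coeff ([:0,2:] * Hp n) (Suc n) = 2^Suc n"
    using Suc by (simp add: mult_pCons_left coeff_pCons)
  have c2: "coeff (pderiv (Hp n)) (Suc n) = 0"
    using Suc by (simp add: coeff_pderiv coeff_eq_0)
  have cc: "coeff (Hp (Suc n)) (Suc n) = 2^Suc n" by (simp only: Hp.simps coeff_diff c1 c2 diff_zero)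
  have "degree ([:0,2:] * Hp n) \<le> Suc n"
    using degree_mult_le[of "[:0,2:]" "Hp n"] Suc by simp
  moreover have "degree (pderiv (Hp n)) \<le> Suc n"
    using Suc by (simp add: degree_pderiv)
  ultimately have "degree (Hp (Suc n)) \<le> Suc n"
    by (simp only: Hp.simps) (rule degree_diff_le)
  moreover have "degree (Hp (Suc n)) \<ge> Suc n"
    using cc by (intro le_degree) simp
  ultimately show ?case using cc by linarith
qed

lemma Hp_nz: "Hp n \<noteq> 0"
  using Hp_deg[of n] by (metis coeff_0 power_not_zero zero_neq_numeral)

lemma Hp_parity: "Hp n \<circ>\<^sub>p [:0,-1:] = smult ((-1)^n) (Hp n)"
proof (induction n)
  case 0 then show ?case by (simp add: one_pCons pcompose_pCons)
next
  case (Suc n)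
  have d: "pderiv (Hp n) \<circ>\<^sub>p [:0,-1:] = - smult ((-1)^n) (pderiv (Hp n))"
  proof -
    have "pderiv (Hp n \<circ>\<^sub>p [:0,-1:]) = (pderiv (Hp n) \<circ>\<^sub>p [:0,-1:]) * [:-1:]"
      by (simp add: pderiv_pcompose pderiv_pCons)
    then show ?thesis using Suc by (simp add: pderiv_smult)
  qed
  have m: "[:0, 2:] \<circ>\<^sub>p [:0,-1:] = - ([:0,2:] :: real poly)" by (simp add: pcompose_pCons)
  have "Hp (Suc n) \<circ>\<^sub>p [:0,-1:] = ([:0,2:] \<circ>\<^sub>p [:0,-1:]) * (Hp n \<circ>\<^sub>p [:0,-1:]) - pderiv (Hp n) \<circ>\<^sub>p [:0,-1:]"
    by (simp only: Hp.simps pcompose_diff pcompose_mult)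
  also have "\<dots> = - [:0,2:] * smult ((-1)^n) (Hp n) + smult ((-1)^n) (pderiv (Hp n))"
    unfolding m Suc.IH d by simp
  also have "\<dots> = smult ((-1)^Suc n) (Hp (Suc n))"
    by (simp only: Hp.simps) (simp add: algebra_simps smult_diff_right)
  finally show ?case .
qed

lemma Hp_poly_neg: "poly (Hp n) (-y) = (-1)^n * poly (Hp n) y"
proof -
  have "poly (Hp n \<circ>\<^sub>p [:0,-1:]) y = poly (smult ((-1)^n) (Hp n)) y"
    using Hp_parity by simp
  then show ?thesis by (simp add: poly_pcompose)
qed

lemma pow_exp_top: "((\<lambda>t::real. t^i * exp (- (t^2))) \<longlongrightarrow> 0) at_top"
proof -
  have a: "((\<lambda>t::real. t^i / exp t) \<longlongrightarrow> 0) at_top" by (rule tendsto_power_div_exp_0)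
  have b: "((\<lambda>t::real. exp (t - t^2)) \<longlongrightarrow> 0) at_top" by real_asymp
  have "((\<lambda>t::real. t^i / exp t * exp (t - t^2)) \<longlongrightarrow> 0 * 0) at_top"
    by (rule tendsto_mult[OF a b])
  moreover have "t^i / exp t * exp (t - t^2) = t^i * exp (- (t^2))" for t :: real
    by (simp add: exp_diff exp_minus field_simps)
  ultimately show ?thesis by simp
qed

lemma poly_exp_top: "((\<lambda>t::real. poly p t * exp (- (t^2))) \<longlongrightarrow> 0) at_top"
proof -
  have "((\<lambda>t. \<Sum>i\<le>degree p. coeff p i * (t^i * exp (- (t^2)))) \<longlongrightarrow> 0) at_top"
    by (intro tendsto_null_sum tendsto_mult_right_zero pow_exp_top)
  moreover have "(\<Sum>i\<le>degree p. coeff p i * (t^i * exp (- (t^2)))) = poly p t * exp (- (t^2))" for t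
    by (simp add: poly_altdef sum_distrib_right mult.assoc)
  ultimately show ?thesis by simp
qed

lemma poly_exp_bot: "((\<lambda>t::real. poly p t * exp (- (t^2))) \<longlongrightarrow> 0) at_bot"
proof -
  have "(((\<lambda>t. poly (p \<circ>\<^sub>p [:0,-1:]) t * exp (- (t^2))) \<circ> uminus) \<longlongrightarrow> 0) at_bot"
    unfolding o_def by (rule filterlim_compose[OF poly_exp_top filterlim_uminus_at_top_at_bot])
  then show ?thesis by (simp add: poly_pcompose o_def)
qed

lemma diff_of_D:
  fixes f f' :: "real \<Rightarrow> real"
  assumes D: "\<And>t. (f has_real_derivative f' t) (at t)"
  shows "f differentiable (at x)" "isCont f x"
proof -
  show "f differentiable (at x)" unfolding real_differentiable_def using D[of x] by blast
  show "isCont f x" using D[of x] by (rule DERIV_isCont)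
qed

lemma rolle_mid:
  fixes f f' :: "real \<Rightarrow> real"
  assumes D: "\<And>t. (f has_real_derivative f' t) (at t)" and ab: "a < b" "f a = f b"
  shows "\<exists>u. a < u \<and> u < b \<and> f' u = 0"
proof -
  have co: "continuous_on {a..b} f"
    by (rule continuous_at_imp_continuous_on) (use diff_of_D[OF D] in blast)
  have "\<exists>z>a. z < b \<and> (f has_real_derivative 0) (at z)"
    by (rule Rolle[OF ab co]) (use diff_of_D[OF D] in blast)
  then obtain z where z: "a < z" "z < b" "(f has_real_derivative 0) (at z)" by blast
  have "f' z = 0" using DERIV_unique[OF D z(3)] .
  then show ?thesis using z by blast
qed

lemma rolle_left_pos:
  fixes f f' :: "real \<Rightarrow> real"
  assumes D: "\<And>t. (f has_real_derivative f' t) (at t)" and lim: "(f \<longlongrightarrow> 0) at_bot"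
    and fr: "f r = 0" and t: "t < r" "f t > 0"
  shows "\<exists>u<r. f' u = 0"
proof -
  define v where "v = f t / 2"
  have v: "v > 0" "v < f t" using t by (auto simp: v_def)
  have cont: "\<forall>x. isCont f x" using diff_of_D[OF D] by blast
  have "eventually (\<lambda>x. f x < v) at_bot" using order_tendstoD(2)[OF lim v(1)] .
  then obtain N where N: "\<And>x. x \<le> N \<Longrightarrow> f x < v" unfolding eventually_at_bot_linorder by blast
  define s where "s = min N (t - 1)"
  have s: "s \<le> t" "f s < v" using N[of s] by (auto simp: s_def)
  have "\<exists>x\<ge>s. x \<le> t \<and> f x = v" by (rule IVT) (use s v cont in auto)
  then obtain u where u: "s \<le> u" "u \<le> t" "f u = v" by blast
  have "\<exists>x\<ge>t. x \<le> r \<and> f x = v" by (rule IVT2) (use t v cont fr in auto)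
  then obtain w where w: "t \<le> w" "w \<le> r" "f w = v" by blast
  have "u \<noteq> t" using u(3) v(2) by auto
  then have uw: "u < w" using u(2) w(1) by simp
  obtain z where z: "u < z" "z < w" "f' z = 0" using rolle_mid[OF D uw] u(3) w(3) by auto
  then show ?thesis using w(2) by (intro exI[of _ z]) simp
qed

lemma rolle_left:
  fixes f f' :: "real \<Rightarrow> real"
  assumes D: "\<And>t. (f has_real_derivative f' t) (at t)" and lim: "(f \<longlongrightarrow> 0) at_bot"
    and fr: "f r = 0" and t: "t < r" "f t \<noteq> 0"
  shows "\<exists>u<r. f' u = 0"
proof (cases "f t > 0")
  case True then show ?thesis using rolle_left_pos[OF D lim fr t(1)] by blast
next
  case False
  then have ft: "- f t > 0" using t by simp
  have D': "((\<lambda>x. - f x) has_real_derivative - f' x) (at x)" for x using D by (intro DERIV_minus)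
  have "((\<lambda>x. - f x) \<longlongrightarrow> - 0) at_bot" using lim by (intro tendsto_minus)
  then have l: "((\<lambda>x. - f x) \<longlongrightarrow> 0) at_bot" by simp
  have "\<exists>u<r. - f' u = 0" by (rule rolle_left_pos[OF D' l _ t(1)]) (use fr ft in auto)
  then show ?thesis by simp
qed

lemma rolle_right_pos:
  fixes f f' :: "real \<Rightarrow> real"
  assumes D: "\<And>t. (f has_real_derivative f' t) (at t)" and lim: "(f \<longlongrightarrow> 0) at_top"
    and fr: "f r = 0" and t: "r < t" "f t > 0"
  shows "\<exists>u>r. f' u = 0"
proof -
  define v where "v = f t / 2"
  have v: "v > 0" "v < f t" using t by (auto simp: v_def)
  have cont: "\<forall>x. isCont f x" using diff_of_D[OF D] by blast
  have "eventually (\<lambda>x. f x < v) at_top" using order_tendstoD(2)[OF lim v(1)] .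
  then obtain N where N: "\<And>x. x \<ge> N \<Longrightarrow> f x < v" unfolding eventually_at_top_linorder by blast
  define s where "s = max N (t + 1)"
  have s: "t \<le> s" "f s < v" using N[of s] by (auto simp: s_def)
  have "\<exists>x\<ge>t. x \<le> s \<and> f x = v" by (rule IVT2) (use s v cont in auto)
  then obtain u where u: "t \<le> u" "u \<le> s" "f u = v" by blast
  have "\<exists>x\<ge>r. x \<le> t \<and> f x = v" by (rule IVT) (use t v cont fr in auto)
  then obtain w where w: "r \<le> w" "w \<le> t" "f w = v" by blast
  have "u \<noteq> t" using u(3) v(2) by auto
  then have uw: "w < u" using u(1) w(2) by simp
  obtain z where z: "w < z" "z < u" "f' z = 0" using rolle_mid[OF D uw] u(3) w(3) by auto
  then show ?thesis using w(1) by (intro exI[of _ z]) simp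
qed

lemma rolle_right:
  fixes f f' :: "real \<Rightarrow> real"
  assumes D: "\<And>t. (f has_real_derivative f' t) (at t)" and lim: "(f \<longlongrightarrow> 0) at_top"
    and fr: "f r = 0" and t: "r < t" "f t \<noteq> 0"
  shows "\<exists>u>r. f' u = 0"
proof (cases "f t > 0")
  case True then show ?thesis using rolle_right_pos[OF D lim fr t(1)] by blast
next
  case False
  then have ft: "- f t > 0" using t by simp
  have D': "((\<lambda>x. - f x) has_real_derivative - f' x) (at x)" for x using D by (intro DERIV_minus)
  have "((\<lambda>x. - f x) \<longlongrightarrow> - 0) at_top" using lim by (intro tendsto_minus)
  then have l: "((\<lambda>x. - f x) \<longlongrightarrow> 0) at_top" by simp
  have "\<exists>u>r. - f' u = 0" by (rule rolle_right_pos[OF D' l _ t(1)]) (use fr ft in auto)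
  then show ?thesis by simp
qed

lemma count_below:
  fixes f f' :: "real \<Rightarrow> real"
  assumes D: "\<And>t. (f has_real_derivative f' t) (at t)" and lim: "(f \<longlongrightarrow> 0) at_bot"
    and nz: "\<And>a b. a < b \<Longrightarrow> \<exists>t. a < t \<and> t < b \<and> f t \<noteq> 0"
  shows "card S = Suc m \<Longrightarrow> finite S \<Longrightarrow> S \<subseteq> {x. f x = 0} \<Longrightarrow>
         \<exists>T. finite T \<and> card T = Suc m \<and> T \<subseteq> {x. x < Max S \<and> f' x = 0}"
proof (induction m arbitrary: S)
  case 0
  from 0(1) have "card S = 1" by simp
  then obtain r where S: "S = {r}" by (rule card_1_singletonE)
  then have "f r = 0" using 0 by auto
  obtain t where t: "r - 1 < t" "t < r" "f t \<noteq> 0" using nz[of "r - 1" r] by auto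
  obtain u where "u < r" "f' u = 0" using rolle_left[OF D lim \<open>f r = 0\<close> t(2,3)] by blast
  then have "{u} \<subseteq> {x. x < Max S \<and> f' x = 0}" using S by simp
  then show ?case by (intro exI[of _ "{u}"]) simp
next
  case (Suc m)
  define M where "M = Max S"
  define S' where "S' = S - {M}"
  have ne: "S \<noteq> {}" using Suc.prems(1) by auto
  have M: "M \<in> S" unfolding M_def by (rule Max_in[OF Suc.prems(2) ne])
  have cS': "card S' = Suc m" using card_Diff_singleton[OF M] Suc.prems(1) unfolding S'_def by simp
  have fS': "finite S'" using Suc.prems(2) unfolding S'_def by blast
  have sub': "S' \<subseteq> {x. f x = 0}" using Suc.prems(3) unfolding S'_def by blast
  have ne': "S' \<noteq> {}" using cS' by auto
  from Suc.IH[OF cS' fS' sub'] obtain T' where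
    T': "finite T'" "card T' = Suc m" "T' \<subseteq> {x. x < Max S' \<and> f' x = 0}" by blast
  have M'S': "Max S' \<in> S'" by (rule Max_in[OF fS' ne'])
  have M'S: "Max S' \<in> S" using M'S' unfolding S'_def by blast
  have "Max S' \<le> M" unfolding M_def by (rule Max_ge[OF Suc.prems(2) M'S])
  moreover have "Max S' \<noteq> M" using M'S' unfolding S'_def by blast
  ultimately have lt: "Max S' < M" by simp
  have f1: "f (Max S') = 0" using M'S Suc.prems(3) by blast
  have f2: "f M = 0" using M Suc.prems(3) by blast
  obtain u where u: "Max S' < u" "u < M" "f' u = 0"
    using rolle_mid[OF D lt] f1 f2 by auto
  have "u \<notin> T'" using T'(3) u(1) by auto
  then have c: "card (insert u T') = Suc (Suc m)" using T'(1,2) by simp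
  have sub: "insert u T' \<subseteq> {x. x < Max S \<and> f' x = 0}" using T'(3) u lt unfolding M_def by auto
  show ?case apply (rule exI[of _ "insert u T'"]) using T'(1) c sub by simp
qed

lemma count_step:
  fixes f f' :: "real \<Rightarrow> real"
  assumes D: "\<And>t. (f has_real_derivative f' t) (at t)" and lim: "(f \<longlongrightarrow> 0) at_bot"
    and lim2: "(f \<longlongrightarrow> 0) at_top"
    and nz: "\<And>a b. a < b \<Longrightarrow> \<exists>t. a < t \<and> t < b \<and> f t \<noteq> 0"
    and S: "finite S" "S \<noteq> {}" "S \<subseteq> {x. f x = 0}"
  shows "\<exists>T. finite T \<and> card T = Suc (card S) \<and> T \<subseteq> {x. f' x = 0}"
proof -
  have "card S \<noteq> 0" using S by simp
  then obtain m where m: "card S = Suc m" using not0_implies_Suc by blast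
  obtain T where T: "finite T" "card T = card S" "T \<subseteq> {x. x < Max S \<and> f' x = 0}"
    using count_below[OF D lim nz m S(1,3)] m by auto
  have MS: "Max S \<in> S" using Max_in S by blast
  obtain t where t: "Max S < t" "t < Max S + 1" "f t \<noteq> 0" using nz[of "Max S" "Max S + 1"] by auto
  obtain w where w: "w > Max S" "f' w = 0" using rolle_right[OF D lim2 _ t(1,3)] MS S by blast
  have "w \<notin> T" using T w by auto
  then have "card (insert w T) = Suc (card S)" using T by simp
  moreover have "insert w T \<subseteq> {x. f' x = 0}" using T w by auto
  ultimately show ?thesis using T by blast
qed

lemma Hp_DERIV:
  "((\<lambda>t. poly (Hp n) t * exp (- (t^2))) has_real_derivative - (poly (Hp (Suc n)) t * exp (- (t^2)))) (at t)"
proof -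
  have e: "((\<lambda>t. exp (- (t^2))) has_real_derivative exp (- (t^2)) * (- (2 * t))) (at t)"
    by (rule derivative_eq_intros refl)+ simp
  have d: "((\<lambda>t. poly (Hp n) t * exp (- (t^2))) has_real_derivative
     poly (pderiv (Hp n)) t * exp (- (t^2)) + (exp (- (t^2)) * (- (2 * t))) * poly (Hp n) t) (at t)"
    by (rule DERIV_mult[OF poly_DERIV e])
  moreover have "poly (pderiv (Hp n)) t * exp (- (t^2)) + (exp (- (t^2)) * (- (2 * t))) * poly (Hp n) t
     = - (poly (Hp (Suc n)) t * exp (- (t^2)))"
    by (simp add: algebra_simps)
  ultimately show ?thesis by simp
qed

lemma Hp_roots_card: "card {x. poly (Hp n) x = 0} = n"
proof (induction n)
  case 0 then show ?case by simp
next
  case (Suc n)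
  show ?case
  proof (cases "n = 0")
    case True
    have h1: "Hp (Suc 0) = [:0,2:]" by simp
    have "{x. poly (Hp (Suc 0)) x = 0} = {0}" unfolding h1 by auto
    then show ?thesis using True by simp
  next
    case False
    let ?f = "\<lambda>t. poly (Hp n) t * exp (- (t^2))"
    let ?f' = "\<lambda>t. - (poly (Hp (Suc n)) t * exp (- (t^2)))"
    have fin: "finite {x. poly (Hp n) x = 0}" by (rule poly_roots_finite[OF Hp_nz])
    have nz: "\<exists>t. a < t \<and> t < b \<and> ?f t \<noteq> 0" if "a < b" for a b
    proof (rule ccontr)
      assume "\<not> ?thesis"
      then have "{a<..<b} \<subseteq> {x. poly (Hp n) x = 0}" by auto
      then show False using finite_subset[OF _ fin] infinite_Ioo[OF that] by blast
    qed
    have ne: "{x. poly (Hp n) x = 0} \<noteq> {}"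
    proof
      assume "{x. poly (Hp n) x = 0} = {}"
      then have "card {x. poly (Hp n) x = 0} = 0" by (simp only: card.empty)
      then show False using Suc.IH False by simp
    qed
    have sub: "{x. poly (Hp n) x = 0} \<subseteq> {x. ?f x = 0}" by auto
    have ex: "\<exists>T. finite T \<and> card T = Suc (card {x. poly (Hp n) x = 0}) \<and> T \<subseteq> {x. ?f' x = 0}"
      by (rule count_step[of ?f ?f' "{x. poly (Hp n) x = 0}", OF Hp_DERIV poly_exp_bot poly_exp_top nz fin ne sub])
    then obtain T where T: "finite T" "card T = Suc (card {x. poly (Hp n) x = 0})" "T \<subseteq> {x. ?f' x = 0}"
      by (elim exE conjE)
    have "T \<subseteq> {x. poly (Hp (Suc n)) x = 0}" using T(3) by (auto simp del: Hp.simps)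
    then have "card T \<le> card {x. poly (Hp (Suc n)) x = 0}"
      by (rule card_mono[OF poly_roots_finite[OF Hp_nz]])
    then have "Suc n \<le> card {x. poly (Hp (Suc n)) x = 0}" using T(2) Suc.IH by simp
    moreover have "card {x. poly (Hp (Suc n)) x = 0} \<le> Suc n"
      using card_poly_roots_bound[OF Hp_nz, of "Suc n"] Hp_deg[of "Suc n"] by simp
    ultimately show ?thesis by linarith
  qed
qed

lemma prod_dvd:
  fixes p :: "real poly"
  assumes "finite R" "R \<subseteq> {x. poly p x = 0}"
  shows "(\<Prod>r\<in>R. [:-r,1:]) dvd p"
  using assms
proof (induction R rule: finite_induct)
  case empty then show ?case by simp
next
  case (insert r R)
  then obtain s where s: "p = (\<Prod>r\<in>R. [:-r,1:]) * s" by (auto elim: dvdE)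
  have "poly (\<Prod>r\<in>R. [:-r,1:]) r \<noteq> 0" using insert by (auto simp: poly_prod)
  moreover have "poly p r = 0" using insert by auto
  ultimately have "poly s r = 0" using s by simp
  then have "[:-r,1:] dvd s" by (simp add: poly_eq_0_iff_dvd)
  then obtain s' where s': "s = [:-r,1:] * s'" by (auto elim: dvdE)
  have pe: "p = ([:-r,1:] * (\<Prod>r\<in>R. [:-r,1:])) * s'" using s s' by (metis mult.assoc mult.commute)
  have "([:-r,1:] * (\<Prod>r\<in>R. [:-r,1:])) dvd p" by (subst pe) (rule dvd_triv_left)
  then show ?case by (simp only: prod.insert[OF insert(1,2)])
qed
lemma poly_factor:
  fixes p :: "real poly"
  assumes p: "p \<noteq> 0" and c: "card {x. poly p x = 0} = degree p"
  shows "\<exists>c. c \<noteq> 0 \<and> (\<forall>y. poly p y = c * (\<Prod>r\<in>{x. poly p x = 0}. (y - r)))"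
proof -
  let ?R = "{x. poly p x = 0}"
  have fin: "finite ?R" using poly_roots_finite[OF p] .
  obtain s where s: "p = (\<Prod>r\<in>?R. [:-r,1:]) * s" using prod_dvd[OF fin] by (auto elim: dvdE)
  have Q: "(\<Prod>r\<in>?R. [:-r,1:]) \<noteq> 0" by (simp add: fin)
  have s0: "s \<noteq> 0" using s p by auto
  have dQ: "degree (\<Prod>r\<in>?R. [:-r,1:]) = card ?R"
    by (subst degree_prod_sum_eq) auto
  have "degree p = degree (\<Prod>r\<in>?R. [:-r,1:]) + degree s"
    using s degree_mult_eq[OF Q s0] by simp
  then have ds: "degree s = 0" using dQ c by simp
  then obtain a where a: "s = [:a:]" by (auto elim: degree_eq_zeroE)
  have "a \<noteq> 0" using s0 a by simp
  moreover have "poly p y = a * (\<Prod>r\<in>?R. (y - r))" for y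
    by (subst s) (simp add: a poly_prod)
  ultimately show ?thesis by blast
qed

lemma gap_exists:
  fixes R :: "real set"
  assumes "finite R"
  shows "\<exists>g>0. \<forall>r\<in>R. \<forall>s\<in>R. r \<noteq> s \<longrightarrow> g \<le> \<bar>r - s\<bar>"
proof -
  define E where "E = {p \<in> R \<times> R. fst p \<noteq> snd p}"
  define D where "D = (\<lambda>p. \<bar>fst p - snd p\<bar>) ` E"
  have "finite E" unfolding E_def using assms by simp
  then have fD: "finite D" unfolding D_def by (rule finite_imageI)
  have pos: "\<forall>d\<in>insert 1 D. 0 < d" unfolding D_def E_def by auto
  define g where "g = Min (insert 1 D)"
  have "0 < g" unfolding g_def using Min_gr_iff[of "insert 1 D" 0] fD pos by simp
  moreover have "g \<le> \<bar>r - s\<bar>" if "r \<in> R" "s \<in> R" "r \<noteq> s" for r s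
  proof -
    have "\<bar>r - s\<bar> \<in> D" unfolding D_def E_def using that by (intro image_eqI[of _ _ "(r,s)"]) auto
    then show ?thesis unfolding g_def using fD by (intro Min_le) auto
  qed
  ultimately show ?thesis by (intro exI[of _ g]) simp
qed

lemma prod_lower:
  fixes R :: "real set"
  assumes fin: "finite R" and ne: "R \<noteq> {}" and k: "0 < \<kappa>" "2 * \<kappa> \<le> g"
    and gap: "\<And>r s. r \<in> R \<Longrightarrow> s \<in> R \<Longrightarrow> r \<noteq> s \<Longrightarrow> g \<le> \<bar>r - s\<bar>"
    and far: "\<And>r. r \<in> R \<Longrightarrow> \<kappa> \<le> \<bar>y - r\<bar>"
  shows "\<kappa> * (g/2)^(card R - 1) \<le> (\<Prod>r\<in>R. \<bar>y - r\<bar>)"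
proof (cases "\<exists>r0\<in>R. \<bar>y - r0\<bar> < g/2")
  case True
  then obtain r0 where r0: "r0 \<in> R" "\<bar>y - r0\<bar> < g/2" by blast
  have others: "g/2 \<le> \<bar>y - r\<bar>" if "r \<in> R - {r0}" for r
  proof -
    have "g \<le> \<bar>r - r0\<bar>" using gap[of r r0] that r0 by auto
    moreover have "\<bar>r - r0\<bar> \<le> \<bar>y - r\<bar> + \<bar>y - r0\<bar>"
      using abs_triangle_ineq[of "r - y" "y - r0"] by (simp add: abs_minus_commute)
    ultimately show ?thesis using r0(2) by linarith
  qed
  have "(\<Prod>r\<in>R - {r0}. g/2) \<le> (\<Prod>r\<in>R - {r0}. \<bar>y - r\<bar>)"
    by (rule prod_mono) (use others k in auto)
  then have "(g/2)^(card R - 1) \<le> (\<Prod>r\<in>R - {r0}. \<bar>y - r\<bar>)"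
    using r0 fin by simp
  moreover have "(\<Prod>r\<in>R. \<bar>y - r\<bar>) = \<bar>y - r0\<bar> * (\<Prod>r\<in>R - {r0}. \<bar>y - r\<bar>)"
    using r0 fin by (simp add: prod.remove)
  moreover have "\<kappa> \<le> \<bar>y - r0\<bar>" using far r0 by auto
  ultimately show ?thesis using k by (simp add: mult_mono)
next
  case False
  then have all: "g/2 \<le> \<bar>y - r\<bar>" if "r \<in> R" for r using that by auto
  have "(\<Prod>r\<in>R. g/2) \<le> (\<Prod>r\<in>R. \<bar>y - r\<bar>)"
    by (rule prod_mono) (use all k in auto)
  then have "(g/2)^card R \<le> (\<Prod>r\<in>R. \<bar>y - r\<bar>)" by simp
  moreover have "(g/2)^card R = (g/2) * (g/2)^(card R - 1)"
    using fin ne by (metis card_gt_0_iff power_eq_if less_numeral_extra(3))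
  moreover have "\<kappa> * (g/2)^(card R - 1) \<le> (g/2) * (g/2)^(card R - 1)"
    using k by (intro mult_right_mono) auto
  ultimately show ?thesis by linarith
qed

lemma card_nonneg_roots:
  assumes "n \<ge> 1"
  shows "card {y. 0 \<le> y \<and> poly (Hp n) y = 0} = hk n"
proof -
  let ?R = "{x. poly (Hp n) x = 0}"
  define P where "P = {r\<in>?R. r > 0}"
  define M where "M = {r\<in>?R. r < 0}"
  define Z where "Z = {r\<in>?R. r = 0}"
  have fin: "finite ?R" by (rule poly_roots_finite[OF Hp_nz])
  have fP: "finite P" "finite M" "finite Z" using fin by (auto simp: P_def M_def Z_def)
  have M: "M = uminus ` P"
  proof -
    have "poly (Hp n) (-x) = 0 \<longleftrightarrow> poly (Hp n) x = 0" for x by (simp add: Hp_poly_neg)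
    then show ?thesis unfolding M_def P_def
      by (auto simp: image_iff intro!: exI[of _ "- _"])
  qed
  have cM: "card M = card P" unfolding M by (rule card_image) (simp add: inj_on_def)
  have R: "?R = P \<union> M \<union> Z" by (auto simp: P_def M_def Z_def)
  have cR: "card ?R = card P + card M + card Z"
  proof -
    have "card (P \<union> M \<union> Z) = card (P \<union> M) + card Z"
      using fP by (intro card_Un_disjoint) (auto simp: P_def M_def Z_def)
    moreover have "card (P \<union> M) = card P + card M"
      using fP by (intro card_Un_disjoint) (auto simp: P_def M_def)
    ultimately show ?thesis unfolding R by simp
  qed
  have N: "{y. 0 \<le> y \<and> poly (Hp n) y = 0} = P \<union> Z" by (auto simp: P_def Z_def)
  have cN: "card (P \<union> Z) = card P + card Z" using fP by (subst card_Un_disjoint) (auto simp: P_def Z_def)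
  have "Z \<subseteq> {0}" by (auto simp: Z_def)
  then have cZ: "card Z \<le> 1" using card_mono[of "{0::real}" Z] by simp
  have eq: "n = 2 * card P + card Z" using cR cM Hp_roots_card[of n] by simp
  have ar: "\<And>n a b::nat. n = 2*a + b \<Longrightarrow> b \<le> 1 \<Longrightarrow> (if even n then n div 2 else (n+1) div 2) = a + b"
    by presburger
  show ?thesis unfolding N cN hk_def by (rule ar[OF eq cZ, symmetric])
qed

lemma Nset: "{y. 0 \<le> y \<and> hermite n y = 0} = {y. 0 \<le> y \<and> poly (Hp n) y = 0}"
  by (simp add: hermite_Hp)

lemma hz_len: "n \<ge> 1 \<Longrightarrow> length (hzeros n) = hk n"
  unfolding hzeros_def Nset using card_nonneg_roots by simp

lemma hz_root:
  assumes "n \<ge> 1" "1 \<le> j" "j \<le> hk n"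
  shows "0 \<le> hz n j \<and> poly (Hp n) (hz n j) = 0"
proof -
  have fin: "finite {y. 0 \<le> y \<and> poly (Hp n) y = 0}"
    by (rule finite_subset[OF _ poly_roots_finite[OF Hp_nz[of n]]]) auto
  have "hz n j \<in> set (hzeros n)" unfolding hz_def using assms hz_len[OF assms(1)] by simp
  then show ?thesis unfolding hzeros_def Nset using fin by simp
qed

lemma hz_mono:
  assumes "n \<ge> 1" "1 \<le> i" "i < j" "j \<le> hk n"
  shows "hz n i < hz n j"
proof -
  have "sorted_wrt (<) (hzeros n)" unfolding hzeros_def by (rule strict_sorted_list_of_set)
  then show ?thesis unfolding hz_def
    using sorted_wrt_nth_less[of "(<)" "hzeros n" "i - 1" "j - 1"] assms hz_len[OF assms(1)] by simp
qed

lemma hz_all: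
  assumes "n \<ge> 1" "0 \<le> r" "poly (Hp n) r = 0"
  shows "\<exists>j. 1 \<le> j \<and> j \<le> hk n \<and> r = hz n j"
proof -
  have fin: "finite {y. 0 \<le> y \<and> poly (Hp n) y = 0}"
    by (rule finite_subset[OF _ poly_roots_finite[OF Hp_nz[of n]]]) auto
  have "r \<in> set (hzeros n)" unfolding hzeros_def Nset using fin assms by simp
  then obtain i where i: "i < length (hzeros n)" "r = hzeros n ! i" by (auto simp: in_set_conv_nth)
  show ?thesis
    by (rule exI[of _ "Suc i"]) (use i hz_len[OF assms(1)] in \<open>auto simp: hz_def\<close>)
qed

lemma hz_le:
  assumes "n \<ge> 1" "1 \<le> i" "i \<le> j" "j \<le> hk n"
  shows "hz n i \<le> hz n j"
  using hz_mono[OF assms(1,2) _ assms(4), of] assms by (cases "i = j") (auto intro: less_imp_le)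

lemma floor_helper:
  fixes z p :: real
  assumes "0 < p" "p \<le> z"
  shows "1 \<le> \<lfloor>z/p\<rfloor> \<and> p * of_int \<lfloor>z/p\<rfloor> \<le> z \<and> z < 2 * p * of_int \<lfloor>z/p\<rfloor>"
proof -
  have u: "1 \<le> z/p" using assms by simp
  have m1: "1 \<le> \<lfloor>z/p\<rfloor>" using u by linarith
  have fl: "of_int \<lfloor>z/p\<rfloor> \<le> z/p" by (rule of_int_floor_le)
  have "of_int \<lfloor>z/p\<rfloor> * p \<le> z" using pos_le_divide_eq[OF assms(1)] fl by blast
  then have a: "p * of_int \<lfloor>z/p\<rfloor> \<le> z" by (simp add: mult.commute)
  have "z/p < of_int \<lfloor>z/p\<rfloor> + 1" by (rule real_of_int_floor_add_one_gt)
  also have "\<dots> \<le> 2 * of_int \<lfloor>z/p\<rfloor>" using m1 by linarith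
  finally have "z < p * (2 * of_int \<lfloor>z/p\<rfloor>)" using assms by (simp add: field_simps)
  then show ?thesis using m1 a by (simp add: mult.assoc)
qed

lemma beta_facts:
  fixes \<kappa> :: real
  assumes k: "0 < \<kappa>"
    and z0: "\<And>j. 1 \<le> j \<Longrightarrow> j \<le> K \<Longrightarrow> 0 \<le> hz n j \<and> (0 < hz n j \<longrightarrow> 2^K * \<kappa> \<le> hz n j)"
    and z2: "\<And>j. 2 \<le> j \<Longrightarrow> j \<le> K \<Longrightarrow> 0 < hz n j"
  shows "Suc i \<le> K \<Longrightarrow> 1 \<le> snd (hab n \<kappa> (Suc i)) \<and> snd (hab n \<kappa> (Suc i)) \<le> 2^(Suc i)
     \<and> \<kappa> * of_int (fst (hab n \<kappa> (Suc i)) - 1) * snd (hab n \<kappa> (Suc i)) = hz n (Suc i)"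
proof (induction i)
  case 0
  have zz: "0 \<le> hz n 1" "0 < hz n 1 \<longrightarrow> 2^K * \<kappa> \<le> hz n 1" using z0[of 1] 0 by auto
  show ?case
  proof (cases "hz n 1 = 0")
    case True
    then show ?thesis by (simp add: Let_def)
  next
    case False
    then have zp: "0 < hz n 1" using zz by simp
    have "2 * \<kappa> \<le> 2^K * \<kappa>"
      using 0 k by (intro mult_right_mono) (auto simp: self_le_power)
    then have kz: "\<kappa> \<le> hz n 1" using zz zp k by linarith
    define m where "m = \<lfloor>hz n 1 / \<kappa>\<rfloor>"
    have F: "1 \<le> m" "\<kappa> * of_int m \<le> hz n 1" "hz n 1 < 2 * \<kappa> * of_int m"
      using floor_helper[OF k kz] unfolding m_def by auto
    have mp: "0 < \<kappa> * of_int m" using F(1) k by simp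
    have h: "hab n \<kappa> (Suc 0) = (m + 1, hz n 1 / (\<kappa> * of_int m))"
      using False by (simp add: Let_def m_def)
    have "1 \<le> hz n 1 / (\<kappa> * of_int m)" using F(2) mp by simp
    moreover have "hz n 1 / (\<kappa> * of_int m) \<le> 2" using F(3) mp by (simp add: field_simps)
    moreover have "\<kappa> * of_int m * (hz n 1 / (\<kappa> * of_int m)) = hz n 1" using k F(1) by simp
    ultimately show ?thesis unfolding h by simp
  qed
next
  case (Suc i)
  define b where "b = snd (hab n \<kappa> (Suc i))"
  have IH: "1 \<le> b" "b \<le> 2^Suc i" using Suc b_def by auto
  define z where "z = hz n (i + 2)"
  have zp: "0 < z" using z2[of "i+2"] Suc.prems by (simp add: z_def)
  have "2^K * \<kappa> \<le> z" using z0[of "i+2"] Suc.prems zp by (simp add: z_def)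
  moreover have "b * \<kappa> \<le> 2^K * \<kappa>"
  proof -
    have "(2::real)^Suc i \<le> 2^K" using Suc.prems by (intro power_increasing) auto
    then show ?thesis using IH k by (intro mult_right_mono) auto
  qed
  ultimately have pz: "b * \<kappa> \<le> z" by linarith
  have bp: "0 < b * \<kappa>" using IH k by simp
  define m where "m = \<lfloor>z / (b * \<kappa>)\<rfloor>"
  have F: "1 \<le> m" "b * \<kappa> * of_int m \<le> z" "z < 2 * (b * \<kappa>) * of_int m"
    using floor_helper[OF bp pz] unfolding m_def by auto
  have mp: "0 < \<kappa> * of_int m" using F(1) k by simp
  have h: "hab n \<kappa> (Suc (Suc i)) = (m + 1, z / (\<kappa> * of_int m))"
    by (simp add: Let_def m_def z_def b_def)
  have "b \<le> z / (\<kappa> * of_int m)" using F(2) mp by (simp add: field_simps)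
  then have "1 \<le> z / (\<kappa> * of_int m)" using IH by linarith
  moreover have "z / (\<kappa> * of_int m) \<le> 2 * b" using F(3) mp by (simp add: field_simps)
  then have "z / (\<kappa> * of_int m) \<le> 2^Suc (Suc i)" using IH by simp
  moreover have "\<kappa> * of_int m * (z / (\<kappa> * of_int m)) = z" using k F(1) by simp
  ultimately show ?case unfolding h by (simp add: z_def)
qed

lemma hpsi_neg: "hpsi n \<kappa> (- j) (- x) = hpsi n \<kappa> j x"
proof -
  have b: "hbeta n \<kappa> (- j) = hbeta n \<kappa> j" by (simp add: hbeta_def)
  have h: "\<bar>hermite n (- y)\<bar> = \<bar>hermite n y\<bar>" for y
    by (simp add: hermite_Hp Hp_poly_neg abs_mult)
  have g: "gauss (- y) = gauss y" for y by (simp add: gauss_def)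
  show ?thesis unfolding hpsi_def b using h g by simp
qed

theorem lemma2p8:
  fixes n :: nat
  assumes "n \<ge> 1"
  shows "\<exists>c>0. \<exists>\<kappa>0>0. \<forall>\<kappa>::real. 0 < \<kappa> \<and> \<kappa> < \<kappa>0 \<longrightarrow>
           (\<forall>j::int. \<bar>j\<bar> \<le> int (hk n) - 1 \<and> hI n \<kappa> j \<noteq> {} \<longrightarrow>
               Min (hpsi n \<kappa> j ` hI n \<kappa> j) \<ge> c * \<kappa>)
         \<and> hpsi n \<kappa> (int (hk n)) (ha n \<kappa> (hk n)) \<ge> c * \<kappa>
         \<and> hpsi n \<kappa> (- int (hk n)) (- ha n \<kappa> (hk n)) \<ge> c * \<kappa>"
proof -
  define k where "k = hk n"
  have k1: "1 \<le> k" using assms unfolding k_def hk_def by auto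
  define R where "R = {x. poly (Hp n) x = 0}"
  have finR: "finite R" unfolding R_def by (rule poly_roots_finite[OF Hp_nz])
  have cR: "card R = n" unfolding R_def by (rule Hp_roots_card)
  have Rne: "R \<noteq> {}" using cR assms by auto
  obtain c0 where c0: "c0 \<noteq> 0" "\<And>y. poly (Hp n) y = c0 * (\<Prod>r\<in>R. (y - r))"
    using poly_factor[OF Hp_nz[of n]] Hp_roots_card[of n] Hp_deg[of n] unfolding R_def by auto
  obtain g where g: "g > 0" "\<And>r s. r \<in> R \<Longrightarrow> s \<in> R \<Longrightarrow> r \<noteq> s \<Longrightarrow> g \<le> \<bar>r - s\<bar>"
    using gap_exists[OF finR] by blast
  define Pp where "Pp = {r\<in>R. 0 < r}"
  have finP: "finite Pp" using finR unfolding Pp_def by simp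
  define \<delta> where "\<delta> = Min (insert 1 Pp)"
  have \<delta>pos: "0 < \<delta>" unfolding \<delta>_def using finP Min_gr_iff[of "insert 1 Pp" 0] by (auto simp: Pp_def)
  have \<delta>le: "\<delta> \<le> r" if "r \<in> R" "0 < r" for r
    unfolding \<delta>_def using finP that by (intro Min_le) (auto simp: Pp_def)
  have hzk0: "0 \<le> hz n k" using hz_root[OF assms, of k] k1 unfolding k_def by auto
  define Rb where "Rb = hz n k + 1"
  have Rb1: "1 \<le> Rb" using hzk0 by (simp add: Rb_def)
  define c where "c = \<bar>c0\<bar> * (g/2)^(n-1) * exp (- (Rb^2) / 2)"
  have cpos: "0 < c" unfolding c_def using c0 g by simp
  define \<kappa>0 where "\<kappa>0 = min (min \<delta> 1) g / 2^(k+1)"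
  have k0pos: "0 < \<kappa>0" unfolding \<kappa>0_def using \<delta>pos g by simp
  have rootpos: "hz n 1 \<le> r \<and> r \<le> hz n k" if rr: "r \<in> R" "0 \<le> r" for r
  proof -
    obtain i where i: "1 \<le> i" "i \<le> k" "r = hz n i" using hz_all[OF assms rr(2)] rr(1) unfolding R_def k_def by auto
    have "hz n 1 \<le> hz n i" by (rule hz_le[OF assms]) (use i k1 in \<open>auto simp: k_def\<close>)
    moreover have "hz n i \<le> hz n k" by (rule hz_le[OF assms]) (use i in \<open>auto simp: k_def\<close>)
    ultimately show ?thesis using i by simp
  qed
  have rootgap: "r \<le> hz n j \<or> hz n (j+1) \<le> r" if rr: "r \<in> R" "0 \<le> r" "1 \<le> j" "j < k" for r j
  proof -
    obtain i where i: "1 \<le> i" "i \<le> k" "r = hz n i" using hz_all[OF assms rr(2)] rr(1) unfolding R_def k_def by auto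
    show ?thesis
    proof (cases "i \<le> j")
      case True
      have "hz n i \<le> hz n j" by (rule hz_le[OF assms]) (use i True rr in \<open>auto simp: k_def\<close>)
      then show ?thesis using i by simp
    next
      case False
      have "hz n (j+1) \<le> hz n i" by (rule hz_le[OF assms]) (use i False rr in \<open>auto simp: k_def\<close>)
      then show ?thesis using i by simp
    qed
  qed
  have rootneg: "- r \<in> R" if "r \<in> R" for r
    using that unfolding R_def by (simp add: Hp_poly_neg)
  show ?thesis
  proof (rule exI[of _ c], rule conjI[OF cpos], rule exI[of _ \<kappa>0], rule conjI[OF k0pos], intro allI impI)
    fix \<kappa> :: real
    assume "0 < \<kappa> \<and> \<kappa> < \<kappa>0"
    then have kp: "0 < \<kappa>" and kl: "\<kappa> < \<kappa>0" by auto
    have "\<kappa> * 2^(k+1) < min (min \<delta> 1) g" using kl unfolding \<kappa>0_def by (simp add: less_divide_eq)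
    moreover have "2^k * \<kappa> \<le> \<kappa> * 2^(k+1)" using kp by simp
    moreover have "2 * \<kappa> \<le> \<kappa> * 2^(k+1)"
    proof -
      have "(2::real) \<le> 2^(k+1)" by (metis le_add2 power_increasing power_one_right one_le_numeral)
      then show ?thesis using kp by simp
    qed
    ultimately have K1: "2^k * \<kappa> \<le> \<delta>" and K2: "2^k * \<kappa> \<le> 1" and K3: "2 * \<kappa> \<le> g" by linarith+
    have key: "c * \<kappa> \<le> \<bar>poly (Hp n) y\<bar> * gauss y"
      if far: "\<And>r. r \<in> R \<Longrightarrow> \<kappa> \<le> \<bar>y - r\<bar>" and yb: "\<bar>y\<bar> \<le> Rb" for y
    proof -
      have pl: "\<kappa> * (g/2)^(n-1) \<le> (\<Prod>r\<in>R. \<bar>y - r\<bar>)"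
        using prod_lower[OF finR Rne kp K3 g(2) far] cR by simp
      have pa: "\<bar>poly (Hp n) y\<bar> = \<bar>c0\<bar> * (\<Prod>r\<in>R. \<bar>y - r\<bar>)"
        by (simp add: c0(2) abs_mult abs_prod)
      have "y^2 \<le> Rb^2" using yb by (metis abs_le_square_iff abs_of_nonneg Rb1 order_trans zero_le_one)
      then have ge: "exp (- (Rb^2) / 2) \<le> gauss y" unfolding gauss_def by simp
      have "c * \<kappa> = (\<bar>c0\<bar> * (\<kappa> * (g/2)^(n-1))) * exp (- (Rb^2) / 2)" unfolding c_def by simp
      also have "\<dots> \<le> (\<bar>c0\<bar> * (\<Prod>r\<in>R. \<bar>y - r\<bar>)) * gauss y"
        using kp g(1) by (intro mult_mono mult_left_mono pl ge) (auto intro!: prod_nonneg mult_nonneg_nonneg)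
      finally show ?thesis unfolding pa .
    qed
    have zf: "0 \<le> hz n j \<and> (0 < hz n j \<longrightarrow> 2^k * \<kappa> \<le> hz n j)" if "1 \<le> j" "j \<le> k" for j
    proof -
      have hr: "0 \<le> hz n j \<and> poly (Hp n) (hz n j) = 0" by (rule hz_root[OF assms]) (use that in \<open>auto simp: k_def\<close>)
      then have "0 < hz n j \<Longrightarrow> \<delta> \<le> hz n j" using \<delta>le unfolding R_def by auto
      then show ?thesis using hr K1 by auto
    qed
    have z2: "0 < hz n j" if "2 \<le> j" "j \<le> k" for j
    proof -
      have "hz n 1 < hz n j" by (rule hz_mono[OF assms]) (use that in \<open>auto simp: k_def\<close>)
      then show ?thesis using zf[of 1] k1 by simp
    qed
    have beta: "1 \<le> snd (hab n \<kappa> j) \<and> snd (hab n \<kappa> j) \<le> 2^j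
        \<and> \<kappa> * of_int (fst (hab n \<kappa> j) - 1) * snd (hab n \<kappa> j) = hz n j" if "1 \<le> j" "j \<le> k" for j
      using beta_facts[of \<kappa> k n "j - 1", OF kp zf z2] that by simp
    have hbeta_pos: "hbeta n \<kappa> (int j) = snd (hab n \<kappa> j)" if "1 \<le> j" for j
      using that by (simp add: hbeta_def)
    have hpsi_eq: "hpsi n \<kappa> j x = \<bar>poly (Hp n) (hbeta n \<kappa> j * \<kappa> * of_int x)\<bar> * gauss (hbeta n \<kappa> j * \<kappa> * of_int x)" for j x
      by (simp add: hpsi_def hermite_Hp)
    have posc: "c * \<kappa> \<le> hpsi n \<kappa> (int j) x" if j: "1 \<le> j" "j < k" and x: "x \<in> hI n \<kappa> (int j)" for j x
    proof -
      define \<beta> where "\<beta> = snd (hab n \<kappa> j)"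
      define a where "a = fst (hab n \<kappa> j)"
      define y where "y = \<beta> * \<kappa> * of_int x"
      have B: "1 \<le> \<beta>" "\<kappa> * of_int (a - 1) * \<beta> = hz n j" using beta[of j] j unfolding \<beta>_def a_def by auto
      have bk: "0 < \<beta> * \<kappa>" using B kp by simp
      have xI: "a \<le> x" "x \<le> \<lfloor>hz n (j + 1) / (\<beta> * \<kappa>)\<rfloor> - 1"
        using x j unfolding hI_def k_def ha_def hb_def a_def \<beta>_def by auto
      have "\<beta> * \<kappa> * of_int a \<le> y" unfolding y_def using xI(1) bk by (intro mult_left_mono) auto
      moreover have "\<beta> * \<kappa> * of_int a = hz n j + \<beta> * \<kappa>" using B(2) by (simp add: algebra_simps)
      ultimately have ylo: "hz n j + \<beta> * \<kappa> \<le> y" by simp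
      have "of_int x \<le> hz n (j + 1) / (\<beta> * \<kappa>) - 1" using xI(2) of_int_floor_le[of "hz n (j + 1) / (\<beta> * \<kappa>)"]
        by (smt (verit) of_int_diff of_int_le_iff of_int_1)
      then have "y \<le> \<beta> * \<kappa> * (hz n (j + 1) / (\<beta> * \<kappa>) - 1)" unfolding y_def using bk
        by (intro mult_left_mono) auto
      also have "\<dots> = hz n (j+1) - \<beta> * \<kappa>" using B(1) kp by (simp add: field_simps)
      finally have yhi: "y \<le> hz n (j+1) - \<beta> * \<kappa>" .
      have zj: "0 \<le> hz n j" using zf[of j] j by simp
      have kb: "\<kappa> \<le> \<beta> * \<kappa>" using B kp by simp
      have far: "\<kappa> \<le> \<bar>y - r\<bar>" if "r \<in> R" for r
      proof (cases "0 \<le> r")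
        case True
        then show ?thesis using rootgap[OF that True j(1) j(2)] ylo yhi kb by auto
      next
        case False
        then show ?thesis using ylo zj kb by auto
      qed
      have "hz n (j+1) \<le> hz n k" by (rule hz_le[OF assms]) (use j in \<open>auto simp: k_def\<close>)
      then have yb: "\<bar>y\<bar> \<le> Rb" using ylo yhi zj bk unfolding Rb_def by auto
      show ?thesis using key[OF far yb] unfolding hpsi_eq hbeta_pos[OF j(1)] y_def \<beta>_def by simp
    qed
    have zeroc: "c * \<kappa> \<le> hpsi n \<kappa> 0 x" if x: "x \<in> hI n \<kappa> 0" for x
    proof -
      define y where "y = \<kappa> * of_int x"
      have a1: "ha n \<kappa> 1 = \<lfloor>hz n 1 / \<kappa>\<rfloor> + 1" by (simp add: ha_def Let_def)
      have "\<bar>x\<bar> \<le> \<lfloor>hz n 1 / \<kappa>\<rfloor> - 1" using x unfolding hI_def a1 by (auto split: if_splits)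
      then have "real_of_int \<bar>x\<bar> \<le> real_of_int (\<lfloor>hz n 1 / \<kappa>\<rfloor> - 1)" by (simp only: of_int_le_iff)
      then have "\<bar>real_of_int x\<bar> \<le> real_of_int \<lfloor>hz n 1 / \<kappa>\<rfloor> - 1" by simp
      then have "\<bar>of_int x\<bar> \<le> hz n 1 / \<kappa> - 1" using of_int_floor_le[of "hz n 1 / \<kappa>"] by linarith
      then have "\<kappa> * \<bar>of_int x\<bar> \<le> \<kappa> * (hz n 1 / \<kappa> - 1)" using kp by (intro mult_left_mono) auto
      moreover have "\<kappa> * (hz n 1 / \<kappa> - 1) = hz n 1 - \<kappa>" using kp by (simp add: right_diff_distrib)
      moreover have "\<bar>y\<bar> = \<kappa> * \<bar>of_int x\<bar>" unfolding y_def using kp by (simp add: abs_mult)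
      ultimately have yb1: "\<bar>y\<bar> \<le> hz n 1 - \<kappa>" by simp
      have absr: "hz n 1 \<le> \<bar>r\<bar>" if "r \<in> R" for r
      proof (cases "0 \<le> r")
        case True then show ?thesis using rootpos[OF that True] by simp
      next
        case False then show ?thesis using rootpos[OF rootneg[OF that]] by simp
      qed
      have far: "\<kappa> \<le> \<bar>y - r\<bar>" if "r \<in> R" for r using absr[OF that] yb1 by linarith
      have "hz n 1 \<le> hz n k" by (rule hz_le[OF assms]) (use k1 in \<open>auto simp: k_def\<close>)
      then have yb: "\<bar>y\<bar> \<le> Rb" using yb1 kp unfolding Rb_def by linarith
      show ?thesis using key[OF far yb] unfolding hpsi_eq y_def by (simp add: hbeta_def)
    qed
    have negc: "c * \<kappa> \<le> hpsi n \<kappa> (- int j) x" if j: "1 \<le> j" "j < k" and x: "x \<in> hI n \<kappa> (- int j)" for j x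
    proof -
      have "- x \<in> hI n \<kappa> (int j)" using x j unfolding hI_def k_def by auto
      then have "c * \<kappa> \<le> hpsi n \<kappa> (int j) (- x)" by (rule posc[OF j])
      then show ?thesis using hpsi_neg[of n \<kappa> "int j" "- x"] by simp
    qed
    have kc: "c * \<kappa> \<le> hpsi n \<kappa> (int k) (ha n \<kappa> k)"
    proof -
      define \<beta> where "\<beta> = snd (hab n \<kappa> k)"
      define a where "a = fst (hab n \<kappa> k)"
      define y where "y = \<beta> * \<kappa> * of_int a"
      have B: "1 \<le> \<beta>" "\<beta> \<le> 2^k" "\<kappa> * of_int (a - 1) * \<beta> = hz n k" using beta[of k] k1 unfolding \<beta>_def a_def by auto
      have y: "y = hz n k + \<beta> * \<kappa>" unfolding y_def using B(3) by (simp add: algebra_simps)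
      have kb: "\<kappa> \<le> \<beta> * \<kappa>" using B kp by simp
      have far: "\<kappa> \<le> \<bar>y - r\<bar>" if "r \<in> R" for r
      proof (cases "0 \<le> r")
        case True
        then show ?thesis using rootpos[OF that True] y kb by auto
      next
        case False
        then show ?thesis using y hzk0 kb by auto
      qed
      have bk2: "\<beta> * \<kappa> \<le> 2^k * \<kappa>" using B kp by (intro mult_right_mono) auto
      have y0: "0 \<le> y" using y hzk0 kb kp by linarith
      have yb: "\<bar>y\<bar> \<le> Rb" unfolding abs_of_nonneg[OF y0] Rb_def using bk2 K2 y by linarith
      show ?thesis using key[OF far yb] k1 unfolding hpsi_eq hbeta_pos[OF k1] y_def \<beta>_def a_def ha_def by simp
    qed
    have bnd: "\<exists>lo hi. hI n \<kappa> j \<subseteq> {lo..hi}" if "\<bar>j\<bar> \<le> int k - 1" for j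
    proof -
      have "nat \<bar>j\<bar> \<noteq> k" using that by auto
      then show ?thesis unfolding hI_def k_def by (auto split: if_splits simp: subset_iff)
    qed
    show "(\<forall>j. \<bar>j\<bar> \<le> int (hk n) - 1 \<and> hI n \<kappa> j \<noteq> {} \<longrightarrow> c * \<kappa> \<le> Min (hpsi n \<kappa> j ` hI n \<kappa> j)) \<and>
         c * \<kappa> \<le> hpsi n \<kappa> (int (hk n)) (ha n \<kappa> (hk n)) \<and>
         c * \<kappa> \<le> hpsi n \<kappa> (- int (hk n)) (- ha n \<kappa> (hk n))"
    proof (intro conjI allI impI)
      fix j :: int
      assume jj: "\<bar>j\<bar> \<le> int (hk n) - 1 \<and> hI n \<kappa> j \<noteq> {}"
      then have jk: "\<bar>j\<bar> \<le> int k - 1" and ne: "hI n \<kappa> j \<noteq> {}" unfolding k_def by auto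
      obtain lo hi where "hI n \<kappa> j \<subseteq> {lo..hi}" using bnd[OF jk] by blast
      then have fin: "finite (hI n \<kappa> j)" using finite_subset by blast
      have all: "c * \<kappa> \<le> hpsi n \<kappa> j x" if x: "x \<in> hI n \<kappa> j" for x
      proof -
        consider "j = 0" | "j > 0" | "j < 0" by linarith
        then show ?thesis
        proof cases
          case 1 then show ?thesis using zeroc x by simp
        next
          case 2
          then have e: "j = int (nat j)" by simp
          have "1 \<le> nat j" "nat j < k" using 2 jk by auto
          then show ?thesis using posc[of "nat j" x] x e by simp
        next
          case 3
          then have e: "j = - int (nat (- j))" by simp
          have "1 \<le> nat (- j)" "nat (- j) < k" using 3 jk by auto
          then show ?thesis using negc[of "nat (- j)" x] x e by simp
        qed
      qed
      show "c * \<kappa> \<le> Min (hpsi n \<kappa> j ` hI n \<kappa> j)"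
        using fin ne all by (subst Min_ge_iff) auto
    next
      show "c * \<kappa> \<le> hpsi n \<kappa> (int (hk n)) (ha n \<kappa> (hk n))" using kc unfolding k_def .
    next
      show "c * \<kappa> \<le> hpsi n \<kappa> (- int (hk n)) (- ha n \<kappa> (hk n))"
        using kc hpsi_neg[of n \<kappa> "int k" "ha n \<kappa> k"] unfolding k_def by simp
    qed
  qed
qed

end
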